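(* Let $g:[0,1]\to[0,\infty)$ be differentiable on $(0,1)$ and suppose that for some $p^*\in(0,1)$, $0<g'(p)\le(1/p-1/p^* )\frac{g(p)}{1-p}$ for $p\in(0,p^* )$ and $g'(p)<0$ for $p\in(p^*,1)$. For integers $r\ge1$ let $u_r(p,n,g)=g(p)^r(1-p)^n(1-(1-p)^n)/p$, let $p^*_r$ be a maximizer of $u_r(\cdot,n,g)$ over $(0,1)$, and let $c(r)=g(p^*_r)/(r-1)$. Then for all $r\ge3$: 1. If either $g(p)/p$ is non-increasing, or $n<1+\frac{4}{(1-p^* )^2}$, then $$c(r)\le0.5\,g\Big(\frac{3}{n+(3/p^* )-1}\Big).$$ 2. If $n\ge1+\frac{4}{(1-p^* )^2}$, then $$c(r)\le\max\Big(0.5\,g\Big(\frac{3}{n+(3/p^* )-1}\Big),\ \frac{1}{r_4-1}\,g\Big(\frac{r_4}{n+(r_4/p^* )-1}\Big)\Big),$$ where $r_4=0.5(n-1)(1-p^* )\Big(1+\sqrt{1-\frac{4}{(n-1)(1-p^* )^2}}\Big)$. *)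

theory Defs
  imports "HOL-Analysis.Analysis"
begin

definition u_obj :: "nat \<Rightarrow> real \<Rightarrow> nat \<Rightarrow> (real \<Rightarrow> real) \<Rightarrow> real" where
  "u_obj r p n g = g p ^ r * (1 - p) ^ n * (1 - (1 - p) ^ n) / p"

end

theory Submission
  imports Defs
begin

lemma bern: fixes t :: real assumes "0 \<le> t" "t \<le> 1"
  shows "real (Suc n) * (1 - t) * t ^ n \<le> 1 - t ^ Suc n"
proof (induction n)
  case 0 then show ?case by simp
next
  case (Suc n)
  have "t ^ Suc n \<le> t ^ n" using assms by (simp add: mult_left_le_one_le)
  hence "real (Suc n) * (1 - t) * t ^ Suc n \<le> real (Suc n) * (1 - t) * t ^ n"
    using assms by (intro mult_left_mono) auto
  moreover have "1 - t ^ Suc (Suc n) = (1 - t ^ Suc n) + (1 - t) * t ^ Suc n" by (simp add: algebra_simps)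
  ultimately show ?case using Suc by (simp add: algebra_simps)
qed

definition AA :: "nat \<Rightarrow> real \<Rightarrow> real" where
  "AA n q = (1 - q) ^ n * (1 - (1 - q) ^ n) / q"

definition AD :: "nat \<Rightarrow> real \<Rightarrow> real" where
  "AD n q = ((-(real n * (1-q)^(n-1))) * (1-(1-q)^n) + (1-q)^n * (real n*(1-q)^(n-1))) / q
            - (1-q)^n*(1-(1-q)^n)/q^2"

lemma AA_deriv: assumes "0 < p" shows "(AA n has_real_derivative AD n p) (at p)"
  unfolding AA_def AD_def
  using assms
  apply (auto intro!: derivative_eq_intros simp: power2_eq_square)
  apply (simp add: field_simps)
  done

lemma AA_pos: assumes "0 < p" "p < 1" "n \<ge> 1" shows "AA n p > 0"
proof -
  have "(1 - p) ^ n < 1" using assms by (simp add: power_less_one_iff)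
  thus ?thesis unfolding AA_def using assms by auto
qed

lemma AD_bound: assumes "0 < p" "p < 1" "n \<ge> 1"
  shows "AD n p \<le> - real n * AA n p / (1 - p)"
proof -
  define t where "t = 1 - p"
  define s where "s = t ^ n"
  obtain m where m: "n = Suc m" using assms by (cases n) auto
  have t: "0 < t" "t < 1" using assms t_def by auto
  have b: "real n * p * t ^ m \<le> 1 - s" using bern[of t m] t m s_def t_def by auto
  have sn: "s = t ^ m * t" using m s_def by simp
  have s0: "s > 0" using t s_def by simp
  have "n * p * s \<le> t * (1 - s)" using b sn t
    by (metis mult.assoc mult.commute mult_left_mono less_imp_le)
  hence key: "n * p * s * s \<le> t * (1 - s) * s" using s0 by (simp add: mult_right_mono)
  have AD: "AD n p = (p * (- (n * s * (1 - s)) + n * s * s) - t * s * (1 - s)) / (p^2 * t)"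
    unfolding AD_def t_def[symmetric] unfolding sn m s_def using t assms
    by (simp add: field_simps power2_eq_square)
  have AA: "- real n * AA n p / (1 - p) = (- n * p * s * (1-s)) / (p^2 * t)"
    unfolding AA_def t_def[symmetric] s_def[symmetric] using t assms by (simp add: field_simps power2_eq_square)
  show ?thesis unfolding AD AA using key assms t
    by (intro divide_right_mono) (auto simp: algebra_simps)
qed

theorem lemma8:
  fixes g :: "real \<Rightarrow> real" and ps :: real and n r :: nat and pr :: real
  assumes g_nonneg: "\<forall>p\<in>{0..1}. g p \<ge> 0"
    and g_diff: "\<forall>p\<in>{0<..<1}. g differentiable (at p)"
    and ps: "0 < ps" "ps < 1"
    and g_left: "\<forall>p\<in>{0<..<ps}. 0 < deriv g p \<and> deriv g p \<le> (1/p - 1/ps) * g p / (1 - p)"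
    and g_right: "\<forall>p\<in>{ps<..<1}. deriv g p < 0"
    and n: "n \<ge> 1"
    and r: "r \<ge> 3"
    and pr_in: "pr \<in> {0<..<1}"
    and pr_max: "\<forall>q\<in>{0<..<1}. u_obj r q n g \<le> u_obj r pr n g"
  shows "((\<forall>x y. 0 < x \<and> x \<le> y \<and> y \<le> 1 \<longrightarrow> g y / y \<le> g x / x) \<or> real n < 1 + 4 / (1 - ps)^2
            \<longrightarrow> g pr / (real r - 1) \<le> (1/2) * g (3 / (real n + 3 / ps - 1)))
       \<and> (real n \<ge> 1 + 4 / (1 - ps)^2 \<longrightarrow>
            (let r4 = (1/2) * (real n - 1) * (1 - ps) * (1 + sqrt (1 - 4 / ((real n - 1) * (1 - ps)^2)))
             in g pr / (real r - 1) \<le> max ((1/2) * g (3 / (real n + 3 / ps - 1)))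
                                            (1 / (r4 - 1) * g (r4 / (real n + r4 / ps - 1)))))"
proof -
  have der: "\<And>p. 0 < p \<Longrightarrow> p < 1 \<Longrightarrow> (g has_real_derivative deriv g p) (at p)"
    using g_diff DERIV_deriv_iff_real_differentiable by auto
  have M1: "g x < g y" if xy: "0 < x" "x < y" "y \<le> ps" for x y
  proof -
    obtain z where z: "x < z" "z < y" "g y - g x = (y - x) * deriv g z"
      using MVT2[of x y g "deriv g"] xy der ps by force
    have "deriv g z > 0" using g_left z xy by auto
    hence "(y - x) * deriv g z > 0" using xy by (simp add: mult_pos_pos)
    thus ?thesis using z by linarith
  qed
  have M2: "g y < g x" if xy: "ps \<le> x" "x < y" "y < 1" for x y
  proof -
    obtain z where z: "x < z" "z < y" "g y - g x = (y - x) * deriv g z"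
      using MVT2[of x y g "deriv g"] xy der ps by force
    have "deriv g z < 0" using g_right z xy by auto
    hence "(y - x) * deriv g z < 0" using xy by (simp add: mult_pos_neg)
    thus ?thesis using z by simp
  qed
  have M3: "g y / y \<le> g x / x" if xy: "0 < x" "x < y" "y \<le> ps" for x y
  proof -
    have d: "((\<lambda>p. g p / p) has_real_derivative (deriv g p * p - g p) / p^2) (at p)"
      if "x \<le> p" "p \<le> y" for p
      using that xy ps der[of p]
      by (auto intro!: derivative_eq_intros simp: power2_eq_square field_simps)
    obtain z where z: "x < z" "z < y" "g y / y - g x / x = (y - x) * ((deriv g z * z - g z) / z^2)"
      using MVT2[OF xy(2) d] by blast
    have z0: "0 < z" "z < ps" "z < 1" using z xy ps by auto
    have gz: "g z \<ge> 0" using g_nonneg z0 by auto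
    have dz: "deriv g z \<le> (1/z - 1/ps) * g z / (1 - z)" using g_left z0 by auto
    have "1/ps \<ge> 1" using ps by simp
    hence "(1/z - 1/ps) / (1 - z) \<le> 1 / z"
      using z0 by (simp add: field_simps)
    hence "(1/z - 1/ps) / (1 - z) * g z \<le> 1 / z * g z" using gz by (rule mult_right_mono)
    hence "deriv g z \<le> g z / z" using dz by simp
    hence "deriv g z * z - g z \<le> 0" using z0 by (simp add: field_simps)
    hence "(y - x) * ((deriv g z * z - g z) / z^2) \<le> 0"
      using z xy by (intro mult_nonneg_nonpos divide_nonpos_nonneg) auto
    thus ?thesis using z by simp
  qed
  have gps: "deriv g ps = 0"
  proof (rule DERIV_local_max[OF der[OF ps]])
    show "0 < min ps (1 - ps)" using ps by simp
    show "\<forall>y. \<bar>ps - y\<bar> < min ps (1 - ps) \<longrightarrow> g y \<le> g ps"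
    proof (intro allI impI)
      fix y assume "\<bar>ps - y\<bar> < min ps (1 - ps)"
      hence y: "0 < y" "y < 1" by auto
      consider "y < ps" | "y = ps" | "y > ps" by linarith
      thus "g y \<le> g ps"
        using M1[of y ps] M2[of ps y] y by cases auto
    qed
  qed
  define q3 where "q3 = 3 * ps / (real n * ps + 3 - ps)"
  have q3eq: "3 / (real n + 3 / ps - 1) = q3"
    unfolding q3_def using ps by (simp add: field_simps)
  have nps: "real n * ps \<ge> 1 * ps" using n ps by (intro mult_right_mono) auto
  have den: "real n * ps + 3 - ps > 0" using nps by simp
  have q3pos: "q3 > 0" unfolding q3_def using ps den by simp
  have q3le: "q3 \<le> ps"
  proof -
    have "ps * (real n * ps - ps) \<ge> 0" using nps ps by simp
    hence "3 * ps \<le> ps * (real n * ps + 3 - ps)" by (simp add: algebra_simps)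
    thus ?thesis unfolding q3_def using den by (simp add: pos_divide_le_eq)
  qed
  have gq3: "g q3 \<ge> 0" using g_nonneg q3pos q3le ps by auto
  have R: "real r \<ge> 3" using r by simp
  have key: "g pr \<le> (real r - 1) / 2 * g q3"
  proof (cases "g pr = 0")
    case True thus ?thesis using gq3 R by simp
  next
    case False
    have p: "0 < pr" "pr < 1" using pr_in by auto
    hence gp: "g pr > 0" using False g_nonneg by (metis atLeastAtMost_iff less_eq_real_def)
    define U where "U = (\<lambda>q. g q ^ r * AA n q)"
    have Ueq: "u_obj r q n g = U q" for q unfolding U_def u_obj_def AA_def by simp
    define U' where "U' = real r * g pr ^ (r - 1) * deriv g pr * AA n pr + g pr ^ r * AD n pr"
    have dU: "(U has_real_derivative U') (at pr)"
      unfolding U_def U'_def using der[OF p] AA_deriv[OF p(1), of n]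
      by (auto intro!: derivative_eq_intros simp: algebra_simps)
    have U0: "U' = 0"
    proof (rule DERIV_local_max[OF dU])
      show "0 < min pr (1 - pr)" using p by simp
      show "\<forall>y. \<bar>pr - y\<bar> < min pr (1 - pr) \<longrightarrow> U y \<le> U pr"
      proof (intro allI impI)
        fix y assume "\<bar>pr - y\<bar> < min pr (1 - pr)"
        hence "y \<in> {0<..<1}" by auto
        thus "U y \<le> U pr" using pr_max Ueq by metis
      qed
    qed
    have Apos: "AA n pr > 0" using AA_pos p n by simp
    have ADb: "AD n pr \<le> - real n * AA n pr / (1 - pr)" using AD_bound p n by simp
    have ADneg: "AD n pr < 0"
    proof -
      have "real n * AA n pr / (1 - pr) > 0" using n Apos p by simp
      thus ?thesis using ADb by simp
    qed
    obtain k where k: "r = Suc k" using r by (cases r) auto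
    have gr: "g pr ^ r = g pr ^ (r - 1) * g pr" unfolding k by (simp add: power_Suc2)
    have gr1: "g pr ^ (r - 1) > 0" using gp by simp
    have E: "real r * deriv g pr * AA n pr + g pr * AD n pr = 0"
    proof -
      have "g pr ^ (r - 1) * (real r * deriv g pr * AA n pr + g pr * AD n pr) = U'"
        unfolding U'_def gr by (simp add: algebra_simps)
      thus ?thesis using U0 gr1 gp by simp
    qed
    have pps: "pr < ps"
    proof (rule ccontr)
      assume "\<not> pr < ps"
      hence "deriv g pr \<le> 0"
      proof (cases "pr = ps")
        case False
        hence "pr \<in> {ps<..<1}" using \<open>\<not> pr < ps\<close> p by auto
        thus ?thesis using g_right by fastforce
      qed (use gps in simp)
      hence "real r * deriv g pr * AA n pr \<le> 0" using Apos
        by (simp add: mult_nonpos_nonneg mult_nonneg_nonpos)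
      moreover have "g pr * AD n pr < 0" using gp ADneg by (simp add: mult_pos_neg)
      ultimately show False using E by simp
    qed
    have dl: "deriv g pr \<le> (1/pr - 1/ps) * g pr / (1 - pr)" using g_left p pps by auto
    have "g pr * (real n * AA n pr / (1 - pr)) \<le> real r * deriv g pr * AA n pr"
    proof -
      have "g pr * AD n pr \<le> g pr * (- real n * AA n pr / (1 - pr))"
        using ADb gp by (intro mult_left_mono) auto
      thus ?thesis using E by simp
    qed
    hence "(g pr * real n / (1 - pr)) * AA n pr \<le> (real r * deriv g pr) * AA n pr"
      by (simp add: algebra_simps)
    hence "g pr * real n / (1 - pr) \<le> real r * deriv g pr" by (rule mult_right_le_imp_le[OF _ Apos])
    also have "\<dots> \<le> real r * ((1/pr - 1/ps) * g pr / (1 - pr))" using dl by (intro mult_left_mono) auto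
    finally have fc: "g pr * real n / (1 - pr) \<le> real r * ((1/pr - 1/ps) * g pr / (1 - pr))" .
    have e1: "g pr * real n / (1 - pr) = (g pr / (1 - pr)) * real n" by simp
    have e2: "real r * ((1/pr - 1/ps) * g pr / (1 - pr)) = (g pr / (1 - pr)) * (real r * (1/pr - 1/ps))"
      by simp
    have gpp: "g pr / (1 - pr) > 0" using gp p by simp
    have "real n \<le> real r * (1/pr - 1/ps)"
      using fc unfolding e1 e2 by (rule mult_left_le_imp_le[OF _ gpp])
    hence "real n * pr * ps \<le> real r * (ps - pr)" using p ps
      by (simp add: field_simps)
    hence pb: "pr * (real n * ps + real r) \<le> real r * ps" by (simp add: algebra_simps)
    show ?thesis
    proof (cases "pr \<le> q3")
      case True
      hence "g pr \<le> g q3" using M1[of pr q3] p q3le by (cases "pr = q3") auto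
      also have "\<dots> = 1 * g q3" by simp
      also have "\<dots> \<le> (real r - 1) / 2 * g q3" using R gq3 by (intro mult_right_mono) auto
      finally show ?thesis .
    next
      case False
      hence "g pr / pr \<le> g q3 / q3" using M3[of q3 pr] q3pos pps by simp
      hence gb: "g pr \<le> g q3 * (pr / q3)" using p q3pos by (simp add: field_simps)
      have ineq: "2 * real r * (real n * ps + 3 - ps) \<le> 3 * (real r - 1) * (real n * ps + real r)"
      proof -
        have "3 * (real r - 1) * (real n * ps + real r) - 2 * real r * (real n * ps + 3 - ps)
              = real n * ps * (real r - 3) + 3 * real r * (real r - 3) + 2 * real r * ps"
          by (simp add: algebra_simps)
        moreover have "real n * ps * (real r - 3) \<ge> 0" using ps R by simp
        moreover have "3 * real r * (real r - 3) \<ge> 0" using R by simp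
        moreover have "2 * real r * ps \<ge> 0" using ps by simp
        ultimately show ?thesis by linarith
      qed
      have nr: "real n * ps + real r > 0" using ps R by (simp add: add_nonneg_pos)
      have "pr \<le> real r * ps / (real n * ps + real r)" using pb nr by (simp add: field_simps)
      also have "\<dots> \<le> (real r - 1) / 2 * q3"
      proof -
        have "ps * (2 * real r * (real n * ps + 3 - ps)) \<le> ps * (3 * (real r - 1) * (real n * ps + real r))"
          using ineq ps by (intro mult_left_mono) auto
        thus ?thesis unfolding q3_def using nr den ps by (simp add: field_simps)
      qed
      finally have "pr / q3 \<le> (real r - 1) / 2" using q3pos by (simp add: field_simps)
      hence "g q3 * (pr / q3) \<le> g q3 * ((real r - 1) / 2)" using gq3 by (intro mult_left_mono) auto
      with gb have "g pr \<le> g q3 * ((real r - 1) / 2)" by (rule order.trans)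
      thus ?thesis by (simp only: mult.commute)
    qed
  qed
  have fin: "g pr / (real r - 1) \<le> (1/2) * g (3 / (real n + 3 / ps - 1))"
    unfolding q3eq using key R by (simp add: field_simps)
  show ?thesis unfolding Let_def using fin by (intro conjI impI le_max_iff_disj[THEN iffD2] disjI1)
qed

end
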